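(* Let $B_1,B_2\subseteq G''$ be two horoballs of type II in $(G'',\rho_c)$, i.e. $B_i=\{y''\in G'': d_{\theta''_i}(y'')\le\delta_i\}$ with $\theta''_i=(\theta_i,\theta'_i)$, $\theta_i\in\partial G$, $\theta'_i\in\partial G'$, $\delta_i\in\mathbb R$, and assume $B_1,B_2$ are nonempty. Then they have the infinite touching property: there exist sequences $(\xi^{(1)}_j)_{j\ge0}$ in $B_1$ and $(\xi^{(2)}_j)_{j\ge0}$ in $B_2$, each consisting of infinitely many distinct points, such that $\sup_j\rho_c(\xi^{(1)}_j,\xi^{(2)}_j)<\infty$.
   Context: $G,G'$ are finitely generated groups with neutral elements $o,o'$, word metrics $d,d'$ from Cayley graphs with respect to finite generating sets, growth rates $a=\lim v_n^{1/n}>1$, $a'=\lim (v'_n)^{1/n}>1$ ($v_n,v'_n$ the ball volumes), and $c:=\log a/\log a'$. $G''=G\times G'$ has origin $o''=(o,o')$ and metric $\rho_c((x,x'),(y,y'))=d(x,y)+d'(x',y')/c$. Horoboundary of $G$: with $d_x(y)=d(x,y)-d(x,o)$, $\overline G$ is the closure of $\{d_x: x\in G\}$ among $1$-Lipschitz functions vanishing at $o$ under pointwise convergence, $\partial G=\overline G\setminus G$, and $\theta\in\partial G$ has associated function $d_\theta$; similarly for $G'$. For $\theta\in\partial G$, $\theta'\in\partial G'$, $d_{(\theta,\theta')}(y,y'):=d_\theta(y)+d_{\theta'}(y')/c$. *)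

theory Defs
  imports "HOL-Algebra.Generated_Groups" Complex_Main
begin

definition word_length :: "('a, 'm) monoid_scheme \<Rightarrow> 'a set \<Rightarrow> 'a \<Rightarrow> nat" where
  "word_length G S g = (LEAST n. \<exists>ws. length ws = n \<and> set ws \<subseteq> S \<union> m_inv G ` S
      \<and> foldr (mult G) ws (one G) = g)"

definition wdist :: "('a, 'm) monoid_scheme \<Rightarrow> 'a set \<Rightarrow> 'a \<Rightarrow> 'a \<Rightarrow> real" where
  "wdist G S x y = real (word_length G S (mult G (m_inv G x) y))"

definition fg_group :: "('a, 'm) monoid_scheme \<Rightarrow> 'a set \<Rightarrow> bool" where
  "fg_group G S \<longleftrightarrow> group G \<and> finite S \<and> S \<subseteq> carrier G \<and> generate G S = carrier G"

definition ball_vol :: "('a, 'm) monoid_scheme \<Rightarrow> 'a set \<Rightarrow> nat \<Rightarrow> nat" where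
  "ball_vol G S n = card {x \<in> carrier G. wdist G S (one G) x \<le> real n}"

definition growth_rate_is :: "('a, 'm) monoid_scheme \<Rightarrow> 'a set \<Rightarrow> real \<Rightarrow> bool" where
  "growth_rate_is G S a \<longleftrightarrow> (\<lambda>n. real (ball_vol G S n) powr (1 / real n)) \<longlonglongrightarrow> a"

definition horo_fun :: "('a, 'm) monoid_scheme \<Rightarrow> 'a set \<Rightarrow> 'a \<Rightarrow> 'a \<Rightarrow> real" where
  "horo_fun G S x = (\<lambda>y. wdist G S x y - wdist G S x (one G))"

text \<open>h (a function on carrier G; values outside the carrier are irrelevant) lies in the
  horofunction compactification: it is 1-Lipschitz, vanishes at o, and lies in the closure
  of the d_x for the topology of pointwise convergence (basic neighbourhoods: finite K, eps).\<close>
definition horo_closure :: "('a, 'm) monoid_scheme \<Rightarrow> 'a set \<Rightarrow> ('a \<Rightarrow> real) \<Rightarrow> bool" where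
  "horo_closure G S h \<longleftrightarrow>
     h (one G) = 0 \<and>
     (\<forall>y\<in>carrier G. \<forall>z\<in>carrier G. \<bar>h y - h z\<bar> \<le> wdist G S y z) \<and>
     (\<forall>K \<epsilon>. finite K \<and> K \<subseteq> carrier G \<and> \<epsilon> > 0 \<longrightarrow>
        (\<exists>x\<in>carrier G. \<forall>y\<in>K. \<bar>horo_fun G S x y - h y\<bar> < \<epsilon>))"

text \<open>Horoboundary: closure minus the image of G; a boundary point is identified with d_theta.\<close>
definition horo_boundary :: "('a, 'm) monoid_scheme \<Rightarrow> 'a set \<Rightarrow> ('a \<Rightarrow> real) \<Rightarrow> bool" where
  "horo_boundary G S h \<longleftrightarrow> horo_closure G S h \<and>
     \<not> (\<exists>x\<in>carrier G. \<forall>y\<in>carrier G. h y = horo_fun G S x y)"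

definition rho_c :: "real \<Rightarrow> ('a, 'm) monoid_scheme \<Rightarrow> 'a set \<Rightarrow> ('b, 'n) monoid_scheme \<Rightarrow> 'b set
    \<Rightarrow> 'a \<times> 'b \<Rightarrow> 'a \<times> 'b \<Rightarrow> real" where
  "rho_c c G S G' S' p q = wdist G S (fst p) (fst q) + wdist G' S' (snd p) (snd q) / c"

definition horoball2 :: "real \<Rightarrow> ('a, 'm) monoid_scheme \<Rightarrow> ('b, 'n) monoid_scheme
    \<Rightarrow> ('a \<Rightarrow> real) \<Rightarrow> ('b \<Rightarrow> real) \<Rightarrow> real \<Rightarrow> ('a \<times> 'b) set" where
  "horoball2 c G G' \<theta> \<theta>' \<delta> = {p \<in> carrier G \<times> carrier G'. \<theta> (fst p) + \<theta>' (snd p) / c \<le> \<delta>}"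

end

theory Submission
  imports Defs
begin

lemma foldr_carrier:
  assumes "group G" "S \<subseteq> carrier G" "set ws \<subseteq> S \<union> m_inv G ` S"
  shows "foldr (mult G) ws (one G) \<in> carrier G"
  using assms(3)
proof (induction ws)
  case Nil then show ?case using assms(1) by (simp add: group.is_monoid monoid.one_closed)
next
  case (Cons x ws)
  have "x \<in> carrier G" using Cons.prems assms(1,2) by (auto intro: group.inv_closed)
  then show ?case using Cons assms(1) by (simp add: group.is_monoid monoid.m_closed)
qed

lemma foldr_append:
  assumes "group G" "S \<subseteq> carrier G" "set ws1 \<subseteq> S \<union> m_inv G ` S" "set ws2 \<subseteq> S \<union> m_inv G ` S"
  shows "foldr (mult G) (ws1 @ ws2) (one G) = mult G (foldr (mult G) ws1 (one G)) (foldr (mult G) ws2 (one G))"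
  using assms(3)
proof (induction ws1)
  case Nil then show ?case using foldr_carrier[OF assms(1,2,4)] assms(1) by (simp add: group.is_monoid monoid.l_one)
next
  case (Cons x ws)
  have "x \<in> carrier G" using Cons.prems assms(1,2) by (auto intro: group.inv_closed)
  then show ?case using Cons foldr_carrier[OF assms(1,2)] assms(1,4)
    by (simp add: group.is_monoid monoid.m_assoc)
qed

lemma foldr_inv:
  assumes "group G" "S \<subseteq> carrier G" "set ws \<subseteq> S \<union> m_inv G ` S"
  shows "set (map (m_inv G) (rev ws)) \<subseteq> S \<union> m_inv G ` S \<and>
     foldr (mult G) (map (m_inv G) (rev ws)) (one G) = m_inv G (foldr (mult G) ws (one G))"
  using assms(3)
proof (induction ws)
  case Nil then show ?case using assms(1) by (simp add: group.is_monoid monoid.inv_one)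
next
  case (Cons x ws)
  have x: "x \<in> carrier G" using Cons.prems assms(1,2) by (auto intro: group.inv_closed)
  have xi: "m_inv G x \<in> S \<union> m_inv G ` S" using Cons.prems assms by (auto simp: group.inv_inv subset_iff)
  have IH: "set (map (m_inv G) (rev ws)) \<subseteq> S \<union> m_inv G ` S"
     "foldr (mult G) (map (m_inv G) (rev ws)) (one G) = m_inv G (foldr (mult G) ws (one G))"
    using Cons by auto
  have "foldr (mult G) (map (m_inv G) (rev (x # ws))) (one G)
     = foldr (mult G) (map (m_inv G) (rev ws) @ [m_inv G x]) (one G)" by simp
  also have "\<dots> = mult G (m_inv G (foldr (mult G) ws (one G))) (m_inv G x)"
    using foldr_append[OF assms(1,2) IH(1), of "[m_inv G x]"] xi IH(2) assms(1) x
    by (simp add: group.inv_closed group.is_monoid monoid.r_one)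
  also have "\<dots> = m_inv G (foldr (mult G) (x # ws) (one G))"
    using x foldr_carrier[OF assms(1,2)] Cons.prems assms(1) by (simp add: group.inv_mult_group)
  finally show ?case using IH(1) xi by simp
qed

lemma gen_word:
  assumes "group G" "S \<subseteq> carrier G" "g \<in> generate G S"
  shows "\<exists>ws. set ws \<subseteq> S \<union> m_inv G ` S \<and> foldr (mult G) ws (one G) = g"
  using assms(3)
proof (induction rule: generate.induct)
  case one then show ?case by (intro exI[of _ "[]"]) simp
next
  case (incl h) then show ?case using assms by (intro exI[of _ "[h]"]) (auto simp: group.is_monoid monoid.r_one subset_iff)
next
  case (inv h) then show ?case using assms by (intro exI[of _ "[m_inv G h]"]) (auto simp: group.is_monoid monoid.r_one subset_iff group.inv_closed)
next
  case (eng h1 h2)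
  then obtain w1 w2 where "set w1 \<subseteq> S \<union> m_inv G ` S" "foldr (mult G) w1 (one G) = h1"
     "set w2 \<subseteq> S \<union> m_inv G ` S" "foldr (mult G) w2 (one G) = h2" by blast
  then show ?case using foldr_append[OF assms(1,2)] by (intro exI[of _ "w1 @ w2"]) auto
qed

lemma wl_le:
  assumes "set ws \<subseteq> S \<union> m_inv G ` S"
  shows "word_length G S (foldr (mult G) ws (one G)) \<le> length ws"
  unfolding word_length_def using assms by (intro Least_le) blast

lemma wl_ex:
  assumes "fg_group G S" "g \<in> carrier G"
  shows "\<exists>ws. length ws = word_length G S g \<and> set ws \<subseteq> S \<union> m_inv G ` S \<and> foldr (mult G) ws (one G) = g"
proof -
  from assms obtain ws where "set ws \<subseteq> S \<union> m_inv G ` S \<and> foldr (mult G) ws (one G) = g"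
    using gen_word[of G S g] unfolding fg_group_def by auto
  then have "\<exists>n ws. length ws = n \<and> set ws \<subseteq> S \<union> m_inv G ` S \<and> foldr (mult G) ws (one G) = g" by blast
  then show ?thesis unfolding word_length_def by (rule LeastI_ex)
qed

lemma wl_tri:
  assumes "fg_group G S" "g \<in> carrier G" "h \<in> carrier G"
  shows "word_length G S (mult G g h) \<le> word_length G S g + word_length G S h"
proof -
  obtain w1 where w1: "length w1 = word_length G S g" "set w1 \<subseteq> S \<union> m_inv G ` S" "foldr (mult G) w1 (one G) = g"
    using wl_ex[OF assms(1,2)] by blast
  obtain w2 where w2: "length w2 = word_length G S h" "set w2 \<subseteq> S \<union> m_inv G ` S" "foldr (mult G) w2 (one G) = h"
    using wl_ex[OF assms(1,3)] by blast
  have "mult G g h = foldr (mult G) (w1 @ w2) (one G)"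
    using foldr_append[of G S w1 w2] assms(1) w1 w2 unfolding fg_group_def by auto
  moreover have "word_length G S (foldr (mult G) (w1 @ w2) (one G)) \<le> length (w1 @ w2)"
    using w1 w2 by (intro wl_le) auto
  ultimately show ?thesis using w1 w2 by simp
qed

lemma wl_inv_le:
  assumes "fg_group G S" "g \<in> carrier G"
  shows "word_length G S (m_inv G g) \<le> word_length G S g"
proof -
  obtain w1 where w1: "length w1 = word_length G S g" "set w1 \<subseteq> S \<union> m_inv G ` S" "foldr (mult G) w1 (one G) = g"
    using wl_ex[OF assms(1,2)] by blast
  have "set (map (m_inv G) (rev w1)) \<subseteq> S \<union> m_inv G ` S \<and>
     foldr (mult G) (map (m_inv G) (rev w1)) (one G) = m_inv G g"
    using foldr_inv[of G S w1] assms w1 unfolding fg_group_def by auto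
  then show ?thesis using wl_le[of "map (m_inv G) (rev w1)" S G] w1 by simp
qed

lemma wl_inv:
  assumes "fg_group G S" "g \<in> carrier G"
  shows "word_length G S (m_inv G g) = word_length G S g"
proof -
  have gr: "group G" using assms unfolding fg_group_def by auto
  have "word_length G S (m_inv G (m_inv G g)) \<le> word_length G S (m_inv G g)"
    using wl_inv_le[OF assms(1), of "m_inv G g"] assms(2) gr by (simp add: group.inv_closed group.inv_inv)
  then show ?thesis using wl_inv_le[OF assms] gr assms(2) by (simp add: group.inv_inv)
qed

lemma wdist_sym:
  assumes "fg_group G S" "x \<in> carrier G" "y \<in> carrier G"
  shows "wdist G S x y = wdist G S y x"
proof -
  have gr: "group G" using assms unfolding fg_group_def by auto
  have "m_inv G (mult G (m_inv G x) y) = mult G (m_inv G y) x"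
    using gr assms by (simp add: group.inv_mult_group group.inv_closed group.inv_inv)
  then show ?thesis unfolding wdist_def
    using wl_inv[OF assms(1), of "mult G (m_inv G x) y"] gr assms
    by (simp add: group.inv_closed group.is_monoid monoid.m_closed)
qed

lemma wdist_tri:
  assumes "fg_group G S" "x \<in> carrier G" "y \<in> carrier G" "z \<in> carrier G"
  shows "wdist G S x z \<le> wdist G S x y + wdist G S y z"
proof -
  have gr: "group G" using assms unfolding fg_group_def by auto
  have e: "mult G (m_inv G x) z = mult G (mult G (m_inv G x) y) (mult G (m_inv G y) z)"
  proof -
    have "mult G (mult G (m_inv G x) y) (mult G (m_inv G y) z) = mult G (m_inv G x) (mult G (mult G y (m_inv G y)) z)"
      using gr assms by (simp add: group.inv_closed group.is_monoid monoid.m_assoc monoid.m_closed)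
    also have "\<dots> = mult G (m_inv G x) z" using gr assms by (simp add: group.r_inv group.is_monoid monoid.l_one)
    finally show ?thesis by simp
  qed
  show ?thesis unfolding wdist_def e
    using wl_tri[OF assms(1), of "mult G (m_inv G x) y" "mult G (m_inv G y) z"] gr assms
    by (simp add: group.inv_closed group.is_monoid monoid.m_closed)
qed

lemma wdist_self:
  assumes "fg_group G S" "x \<in> carrier G"
  shows "wdist G S x x = 0"
proof -
  have gr: "group G" using assms unfolding fg_group_def by auto
  have "word_length G S (one G) \<le> 0" using wl_le[of "[]" S G] by simp
  then show ?thesis unfolding wdist_def using gr assms by (simp add: group.l_inv)
qed

lemma ball_finite:
  assumes "fg_group G S" "b \<in> carrier G"
  shows "finite {z \<in> carrier G. wdist G S b z \<le> real n}"
proof -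
  have gr: "group G" and fin: "finite S" using assms unfolding fg_group_def by auto
  have "{z \<in> carrier G. wdist G S b z \<le> real n} \<subseteq>
     (\<lambda>ws. mult G b (foldr (mult G) ws (one G))) ` {ws. set ws \<subseteq> S \<union> m_inv G ` S \<and> length ws \<le> n}"
  proof
    fix z assume z: "z \<in> {z \<in> carrier G. wdist G S b z \<le> real n}"
    then have zc: "z \<in> carrier G" by auto
    have ic: "mult G (m_inv G b) z \<in> carrier G" using gr assms zc by (simp add: group.inv_closed group.is_monoid monoid.m_closed)
    obtain w where w: "length w = word_length G S (mult G (m_inv G b) z)" "set w \<subseteq> S \<union> m_inv G ` S"
      "foldr (mult G) w (one G) = mult G (m_inv G b) z"
      using wl_ex[OF assms(1) ic] by blast
    have "mult G b (mult G (m_inv G b) z) = z"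
      using gr assms zc by (simp add: group.inv_closed group.is_monoid group.r_inv monoid.l_one flip: monoid.m_assoc)
    moreover have "length w \<le> n" using z w(1) unfolding wdist_def by simp
    ultimately show "z \<in> (\<lambda>ws. mult G b (foldr (mult G) ws (one G))) ` {ws. set ws \<subseteq> S \<union> m_inv G ` S \<and> length ws \<le> n}"
      using w by (intro image_eqI[of _ _ w]) auto
  qed
  moreover have "finite {ws. set ws \<subseteq> S \<union> m_inv G ` S \<and> length ws \<le> n}"
    using fin by (intro finite_lists_length_le) auto
  ultimately show ?thesis by (meson finite_imageI finite_subset)
qed

lemma int_close_eq:
  assumes "(a::real) \<in> \<int>" "b \<in> \<int>" "\<bar>a - b\<bar> < 1/2"
  shows "a = b"
proof -
  obtain i j where "a = of_int i" "b = of_int j" using assms(1,2) by (metis Ints_cases)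
  moreover have "\<bar>real_of_int (i - j)\<bar> < 1" using assms(3) calculation by simp
  then have "\<bar>i - j\<bar> < 1" by linarith
  then have "i = j" by simp
  ultimately show ?thesis by simp
qed

lemma horo_fun_int:
  assumes "fg_group G S"
  shows "horo_fun G S x y \<in> \<int>"
  unfolding horo_fun_def wdist_def by (intro Ints_diff Ints_of_nat)

lemma closure_int:
  assumes "fg_group G S" "horo_closure G S h" "y \<in> carrier G"
  shows "h y \<in> \<int>"
proof -
  have ap: "\<exists>x\<in>carrier G. \<bar>horo_fun G S x y - h y\<bar> < e" if "e > 0" for e
  proof -
    have all: "\<forall>K \<epsilon>. finite K \<and> K \<subseteq> carrier G \<and> \<epsilon> > 0 \<longrightarrow>
        (\<exists>x\<in>carrier G. \<forall>y\<in>K. \<bar>horo_fun G S x y - h y\<bar> < \<epsilon>)"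
      using assms(2) unfolding horo_closure_def by blast
    show ?thesis using all[rule_format, of "{y}" e] assms(3) that by simp
  qed
  obtain x where x: "\<bar>horo_fun G S x y - h y\<bar> < 1/4" using ap[of "1/4"] by auto
  define n where "n = horo_fun G S x y"
  have nI: "n \<in> \<int>" unfolding n_def using horo_fun_int[OF assms(1)] .
  show ?thesis
  proof (rule ccontr)
    assume "h y \<notin> \<int>"
    then have ne: "h y \<noteq> n" using nI by auto
    define e where "e = min (1/4) \<bar>h y - n\<bar>"
    have "e > 0" unfolding e_def using ne by auto
    then obtain x' where x': "\<bar>horo_fun G S x' y - h y\<bar> < e" using ap by blast
    have "\<bar>horo_fun G S x' y - n\<bar> < 1/2"
      using x x' unfolding e_def n_def by linarith
    then have "horo_fun G S x' y = n"
      using int_close_eq[OF horo_fun_int[OF assms(1)] nI] by blast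
    then show False using x' unfolding e_def by auto
  qed
qed

lemma descent:
  assumes fg: "fg_group G S" and hb: "horo_boundary G S \<theta>" and bc: "b \<in> carrier G"
  shows "\<exists>y\<in>carrier G. wdist G S b y = real R \<and> \<theta> y = \<theta> b - real R"
proof -
  have gr: "group G" and Sc: "S \<subseteq> carrier G" using fg unfolding fg_group_def by auto
  have hc: "horo_closure G S \<theta>" using hb unfolding horo_boundary_def by auto
  have "\<forall>z\<in>carrier G. \<exists>y. y \<in> carrier G \<and> \<theta> y \<noteq> horo_fun G S z y"
    using hb unfolding horo_boundary_def by blast
  from bchoice[OF this] obtain yz where yz0: "\<forall>z\<in>carrier G. yz z \<in> carrier G \<and> \<theta> (yz z) \<noteq> horo_fun G S z (yz z)"
    by blast
  have yz: "\<And>z. z \<in> carrier G \<Longrightarrow> yz z \<in> carrier G \<and> \<theta> (yz z) \<noteq> horo_fun G S z (yz z)"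
    using yz0 by blast
  define Bs where "Bs = {z \<in> carrier G. wdist G S b z \<le> real R}"
  define K where "K = Bs \<union> yz ` Bs"
  have finB: "finite Bs" unfolding Bs_def by (rule ball_finite[OF fg bc])
  have finK: "finite K" "K \<subseteq> carrier G" unfolding K_def using finB yz by (auto simp: Bs_def)
  have bB: "b \<in> Bs" unfolding Bs_def using wdist_self[OF fg bc] bc by auto
  obtain z where zc: "z \<in> carrier G" and za: "\<forall>y\<in>K. \<bar>horo_fun G S z y - \<theta> y\<bar> < 1/2"
  proof -
    have all: "\<forall>K \<epsilon>. finite K \<and> K \<subseteq> carrier G \<and> \<epsilon> > 0 \<longrightarrow>
        (\<exists>x\<in>carrier G. \<forall>y\<in>K. \<bar>horo_fun G S x y - \<theta> y\<bar> < \<epsilon>)"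
      using hc unfolding horo_closure_def by blast
    show ?thesis using all[rule_format, of K "1/2"] finK that by auto
  qed
  have eqK: "\<theta> y = horo_fun G S z y" if "y \<in> K" for y
  proof -
    have yc: "y \<in> carrier G" using that finK by auto
    have "\<bar>\<theta> y - horo_fun G S z y\<bar> < 1/2" using za that by (simp add: abs_minus_commute)
    then show ?thesis using int_close_eq[OF closure_int[OF fg hc yc] horo_fun_int[OF fg]] by simp
  qed
  have zB: "z \<notin> Bs"
  proof
    assume "z \<in> Bs"
    then have "yz z \<in> K" unfolding K_def by auto
    then show False using eqK yz zc by blast
  qed
  then have far: "wdist G S b z > real R" unfolding Bs_def using zc by auto
  have ic: "mult G (m_inv G b) z \<in> carrier G" using gr bc zc by (simp add: group.inv_closed group.is_monoid monoid.m_closed)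
  obtain ws where ws: "length ws = word_length G S (mult G (m_inv G b) z)" "set ws \<subseteq> S \<union> m_inv G ` S"
      "foldr (mult G) ws (one G) = mult G (m_inv G b) z"
    using wl_ex[OF fg ic] by blast
  define n where "n = length ws"
  have dn: "wdist G S b z = real n" unfolding wdist_def n_def ws(1) by simp
  have Rn: "R < n" using far dn by simp
  define ft where "ft = foldr (mult G) (take R ws) (one G)"
  define fd where "fd = foldr (mult G) (drop R ws) (one G)"
  have st: "set (take R ws) \<subseteq> S \<union> m_inv G ` S" "set (drop R ws) \<subseteq> S \<union> m_inv G ` S"
    using ws(2) by (meson order_trans set_take_subset set_drop_subset)+
  have ftc: "ft \<in> carrier G" and fdc: "fd \<in> carrier G"
    unfolding ft_def fd_def using foldr_carrier[OF gr Sc] st by auto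
  have split: "mult G (m_inv G b) z = mult G ft fd"
    using foldr_append[OF gr Sc st] ws(3) unfolding ft_def fd_def by simp
  define y where "y = mult G b ft"
  have yc: "y \<in> carrier G" unfolding y_def using gr bc ftc by (simp add: group.is_monoid monoid.m_closed)
  have e1: "mult G (m_inv G b) y = ft"
    unfolding y_def using gr bc ftc by (simp add: group.inv_closed group.is_monoid group.l_inv monoid.l_one flip: monoid.m_assoc)
  have zz: "z = mult G b (mult G ft fd)"
    using split gr bc zc by (metis group.inv_solve_left ic)
  have e2: "mult G (m_inv G y) z = fd"
  proof -
    have "z = mult G y fd" unfolding zz y_def using gr bc ftc fdc by (simp add: group.is_monoid monoid.m_assoc)
    then show ?thesis using gr yc fdc zc by (metis group.inv_solve_left)
  qed
  have d1: "wdist G S b y \<le> real R"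
    unfolding wdist_def e1 ft_def using wl_le[OF st(1)] Rn n_def by simp
  have d2: "wdist G S y z \<le> real n - real R"
    unfolding wdist_def e2 fd_def using wl_le[OF st(2)] Rn n_def by simp
  have tri: "wdist G S b z \<le> wdist G S b y + wdist G S y z" by (rule wdist_tri[OF fg bc yc zc])
  have D1: "wdist G S b y = real R" and D2: "wdist G S y z = real n - real R"
    using d1 d2 tri dn by linarith+
  have yK: "y \<in> K" and bK: "b \<in> K" unfolding K_def Bs_def using D1 yc bB by (auto simp: Bs_def)
  have "\<theta> y - \<theta> b = wdist G S z y - wdist G S z b"
    using eqK[OF yK] eqK[OF bK] unfolding horo_fun_def by simp
  also have "\<dots> = wdist G S y z - wdist G S b z" using wdist_sym[OF fg] yc bc zc by simp
  finally have "\<theta> y = \<theta> b - real R" using D2 dn by simp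
  then show ?thesis using yc D1 by blast
qed

lemma lip:
  assumes "horo_boundary G S \<theta>" "y \<in> carrier G" "z \<in> carrier G"
  shows "\<bar>\<theta> y - \<theta> z\<bar> \<le> wdist G S y z"
  using assms unfolding horo_boundary_def horo_closure_def by blast

theorem lemma4p2:
  fixes G :: "('a, 'm) monoid_scheme" and S :: "'a set"
    and G' :: "('b, 'n) monoid_scheme" and S' :: "'b set"
    and a a' c :: real
    and \<theta>1 \<theta>2 :: "'a \<Rightarrow> real" and \<theta>1' \<theta>2' :: "'b \<Rightarrow> real" and \<delta>1 \<delta>2 :: real
  assumes "fg_group G S" and "fg_group G' S'"
    and "growth_rate_is G S a" and "a > 1"
    and "growth_rate_is G' S' a'" and "a' > 1"
    and "c = ln a / ln a'"
    and "horo_boundary G S \<theta>1" and "horo_boundary G S \<theta>2"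
    and "horo_boundary G' S' \<theta>1'" and "horo_boundary G' S' \<theta>2'"
    and "horoball2 c G G' \<theta>1 \<theta>1' \<delta>1 \<noteq> {}"
    and "horoball2 c G G' \<theta>2 \<theta>2' \<delta>2 \<noteq> {}"
  shows "\<exists>\<xi>1 \<xi>2 :: nat \<Rightarrow> 'a \<times> 'b.
           (\<forall>j. \<xi>1 j \<in> horoball2 c G G' \<theta>1 \<theta>1' \<delta>1) \<and>
           (\<forall>j. \<xi>2 j \<in> horoball2 c G G' \<theta>2 \<theta>2' \<delta>2) \<and>
           inj \<xi>1 \<and> inj \<xi>2 \<and>
           (\<exists>M. \<forall>j. rho_c c G S G' S' (\<xi>1 j) (\<xi>2 j) \<le> M)"
proof -
  note fg = assms(1) and fg' = assms(2)
  have cpos: "c > 0" using assms(4,6,7) by simp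
  obtain y1 y1' where y1: "y1 \<in> carrier G" "y1' \<in> carrier G'" "\<theta>1 y1 + \<theta>1' y1' / c \<le> \<delta>1"
    using assms(12) unfolding horoball2_def by auto
  have "\<forall>R. \<exists>u. u \<in> carrier G \<and> wdist G S y1 u = real R \<and> \<theta>2 u = \<theta>2 y1 - real R"
    using descent[OF fg assms(9) y1(1)] by blast
  from choice[OF this] obtain u where u0: "\<forall>R. u R \<in> carrier G \<and> wdist G S y1 (u R) = real R \<and> \<theta>2 (u R) = \<theta>2 y1 - real R"
    by blast
  have u: "\<And>R. u R \<in> carrier G \<and> wdist G S y1 (u R) = real R \<and> \<theta>2 (u R) = \<theta>2 y1 - real R" using u0 by blast
  define m where "m R = nat \<lceil>c * real R\<rceil>" for R :: nat
  have m1: "c * real R \<le> real (m R)" for R unfolding m_def by linarith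
  have m2: "real (m R) < c * real R + 1" for R
  proof -
    have "0 \<le> c * real R" using cpos by simp
    then have "real (m R) = of_int \<lceil>c * real R\<rceil>" unfolding m_def by simp
    then show ?thesis using ceiling_correct[of "c * real R"] by linarith
  qed
  have "\<forall>R. \<exists>u'. u' \<in> carrier G' \<and> wdist G' S' y1' u' = real (m R) \<and> \<theta>1' u' = \<theta>1' y1' - real (m R)"
    using descent[OF fg' assms(10) y1(2)] by blast
  from choice[OF this] obtain u' where u'0: "\<forall>R. u' R \<in> carrier G' \<and> wdist G' S' y1' (u' R) = real (m R) \<and> \<theta>1' (u' R) = \<theta>1' y1' - real (m R)"
    by blast
  have u': "\<And>R. u' R \<in> carrier G' \<and> wdist G' S' y1' (u' R) = real (m R) \<and> \<theta>1' (u' R) = \<theta>1' y1' - real (m R)" using u'0 by blast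
  define K0 where "K0 = nat \<lceil>\<theta>2 y1 + \<theta>2' y1' / c + 1 / c - \<delta>2\<rceil>"
  have K0: "\<theta>2 y1 + \<theta>2' y1' / c + 1 / c - \<delta>2 \<le> real K0" unfolding K0_def by linarith
  have "\<forall>R. \<exists>w. w \<in> carrier G \<and> wdist G S (u R) w = real K0 \<and> \<theta>2 w = \<theta>2 (u R) - real K0"
    using descent[OF fg assms(9)] u by blast
  from choice[OF this] obtain w where w0: "\<forall>R. w R \<in> carrier G \<and> wdist G S (u R) (w R) = real K0 \<and> \<theta>2 (w R) = \<theta>2 (u R) - real K0"
    by blast
  have w: "\<And>R. w R \<in> carrier G \<and> wdist G S (u R) (w R) = real K0 \<and> \<theta>2 (w R) = \<theta>2 (u R) - real K0" using w0 by blast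
  define \<xi>1 where "\<xi>1 R = (u R, u' R)" for R
  define \<xi>2 where "\<xi>2 R = (w R, u' R)" for R
  have in1: "\<xi>1 R \<in> horoball2 c G G' \<theta>1 \<theta>1' \<delta>1" for R
  proof -
    have a1: "\<theta>1 (u R) \<le> \<theta>1 y1 + real R" using lip[OF assms(8) y1(1), of "u R"] u[of R] by linarith
    have a2: "real R \<le> real (m R) / c" using m1[of R] cpos by (simp add: pos_le_divide_eq mult.commute)
    have a3: "\<theta>1' (u' R) / c = \<theta>1' y1' / c - real (m R) / c" using u'[of R] by (simp add: diff_divide_distrib)
    have "\<theta>1 (u R) + \<theta>1' (u' R) / c \<le> \<delta>1" using a1 a2 a3 y1(3) by linarith
    then show ?thesis unfolding horoball2_def \<xi>1_def using u[of R] u'[of R] by simp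
  qed
  have in2: "\<xi>2 R \<in> horoball2 c G G' \<theta>2 \<theta>2' \<delta>2" for R
  proof -
    have a1: "\<theta>2' (u' R) \<le> \<theta>2' y1' + real (m R)" using lip[OF assms(11) y1(2), of "u' R"] u'[of R] by linarith
    have a2: "real (m R) / c < real R + 1 / c" using m2[of R] cpos by (simp add: divide_less_eq algebra_simps)
    have a3: "\<theta>2' (u' R) / c \<le> \<theta>2' y1' / c + real (m R) / c"
      using a1 cpos by (simp add: add_divide_distrib[symmetric] divide_right_mono)
    have "\<theta>2 (w R) = \<theta>2 y1 - real R - real K0" using u[of R] w[of R] by simp
    then have "\<theta>2 (w R) + \<theta>2' (u' R) / c \<le> \<delta>2" using a2 a3 K0 by linarith
    then show ?thesis unfolding horoball2_def \<xi>2_def using w[of R] u'[of R] by simp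
  qed
  have inj1: "inj \<xi>1"
  proof (rule injI)
    fix R R' assume "\<xi>1 R = \<xi>1 R'"
    then have "u R = u R'" unfolding \<xi>1_def by simp
    then have "\<theta>2 (u R) = \<theta>2 (u R')" by (rule arg_cong)
    then have "real R = real R'" using u[of R] u[of R'] by linarith
    then show "R = R'" by simp
  qed
  have inj2: "inj \<xi>2"
  proof (rule injI)
    fix R R' assume "\<xi>2 R = \<xi>2 R'"
    then have "w R = w R'" unfolding \<xi>2_def by simp
    then have "\<theta>2 (w R) = \<theta>2 (w R')" by (rule arg_cong)
    then have "real R = real R'" using w[of R] w[of R'] u[of R] u[of R'] by linarith
    then show "R = R'" by simp
  qed
  have bd: "rho_c c G S G' S' (\<xi>1 j) (\<xi>2 j) \<le> real K0" for j
    unfolding rho_c_def \<xi>1_def \<xi>2_def using w[of j] u'[of j] wdist_self[OF fg'] by simp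
  show ?thesis
    apply (rule exI[of _ \<xi>1], rule exI[of _ \<xi>2])
    using in1 in2 inj1 inj2 bd by blast
qed

end
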